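(* Fix $t\in\{0,\dots,T\}$ and a $\mathcal F_t$-measurable random vector $\zeta_t:\Omega\to\mathbb R^d$. Then $$\zeta_t\in -K_t\quad \mathcal P\text{-q.s.}\qquad\Longleftrightarrow\qquad \langle \zeta_t, X_t\rangle\le 0\quad \overline{\mathcal P}\text{-q.s.}$$ Consequently, an $\mathbb F$-adapted process $\eta=(\eta_t)_{0\le t\le T}$ is an admissible trading strategy (i.e. $\eta\in\mathcal A$) if and only if $\langle\eta_t,X_t\rangle\le 0$ $\overline{\mathcal P}$-q.s. for all $t\le T$.
   Context: Abstract setting: $(\Omega,\mathcal F)$ is a measurable space with two filtrations $\mathbb F^0=(\mathcal F^0_t)_{t=0,\dots,T}\subset\mathbb F=(\mathcal F_t)_{t=0,\dots,T}$, $T\in\mathbb N$, and $\mathcal P$ is an arbitrary nonempty family of probability measures on $(\Omega,\mathcal F)$. A set is $\mathcal P$-polar if it is contained in a universally measurable set which is null under every $\mathbb P\in\mathcal P$; "$\mathcal P$-q.s." means outside a $\mathcal P$-polar set. Let $d\ge 2$ and $\langle x,y\rangle=\sum_i x^iy^i$. For each $t$, $K_t:\Omega\to 2^{\mathbb R^d}$ is an $\mathcal F^0_t$-measurable random set such that each $K_t(\omega)$ is a closed convex cone containing $\mathbb R^d_+$; $K_t^*(\omega):=\{y\in\mathbb R^d:\langle x,y\rangle\ge0\ \forall x\in K_t(\omega)\}$ and $K_t^{*,0}(\omega):=\{y\in K^*_t(\omega): y^d=1\}$. Standing assumptions: $K_t^*(\omega)\cap\partial\mathbb R^d_+=\{0\}$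 and $\mathrm{int}K^*_t(\omega)\neq\emptyset$ for all $\omega,t$; $S$ is an $\mathbb F^0$-adapted process with $S_t(\omega)\in K^{*,0}_t(\omega)\cap\mathrm{int}K^*_t(\omega)$ for all $\omega,t$; and there is a constant $c>1$ such that $c^{-1}S^i_t(\omega)\le y^i\le cS^i_t(\omega)$ for all $i\le d-1$, $y\in K^{*,0}_t(\omega)$, $\omega$, $t$. An $\mathbb F$-adapted process $\eta$ is an admissible trading strategy ($\eta\in\mathcal A$) if $\eta_t\in -K_t$ $\mathcal P$-q.s. for all $t\le T$. Enlargement: $\Lambda_1:=[c^{-1},c]^{d-1}$, $\Lambda:=(\Lambda_1)^{T+1}$ with elements $\theta=(\theta_0,\dots,\theta_T)$, $\mathcal F^\Lambda_T$ its Borel $\sigma$-field, $\overline\Omega:=\Omega\times\Lambda$, $\overline{\mathcal F}:=\mathcal F\otimes\mathcal F^\Lambda_T$. For $\bar\omega=(\omega,\theta)$, $X_t(\bar\omega):=\Pi_{K^{*,0}_t(\omega)}[S_t(\omega)\theta_t]$, where $S_t(\omega)\theta_t:=(S^1_t(\omega)\theta^1_t,\dots,S^{d-1}_t(\omega)\theta^{d-1}_t,S^d_t(\omega))$ and $\Pi_C$ is the Euclidean projection onto the closed convex set $C$. $\overline{\mathcal P}:=\{\overline{\mathbb P}$ probability on $(\overline\Omega,\overline{\mathcal F})$ with $\overline{\mathbb P}|_\Omega\in\mathcal P\}$. *)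

theory Defs
  imports "HOL-Probability.Probability"
begin

definition universally_measurable :: "'a measure \<Rightarrow> 'a set \<Rightarrow> bool" where
  "universally_measurable M A \<longleftrightarrow>
     (\<forall>\<mu>. prob_space \<mu> \<and> sets \<mu> = sets M \<longrightarrow> A \<in> sets (completion \<mu>))"

definition polar :: "'a measure set \<Rightarrow> 'a measure \<Rightarrow> 'a set \<Rightarrow> bool" where
  "polar Pfam M N \<longleftrightarrow>
     (\<exists>A. universally_measurable M A \<and> N \<subseteq> A \<and> (\<forall>P\<in>Pfam. emeasure (completion P) A = 0))"

definition qs :: "'a measure set \<Rightarrow> 'a measure \<Rightarrow> ('a \<Rightarrow> bool) \<Rightarrow> bool" where
  "qs Pfam M Q \<longleftrightarrow> (\<exists>N. polar Pfam M N \<and> (\<forall>\<omega>\<in>space M - N. Q \<omega>))"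

definition random_set_measurable :: "'a measure \<Rightarrow> ('a \<Rightarrow> (real^'d) set) \<Rightarrow> bool" where
  "random_set_measurable N K \<longleftrightarrow>
     (\<forall>U. open U \<longrightarrow> {\<omega>\<in>space N. K \<omega> \<inter> U \<noteq> {}} \<in> sets N)"

definition nonneg_orthant :: "(real^'d) set" where
  "nonneg_orthant = {x. \<forall>i. 0 \<le> x $ i}"

definition dual_cone :: "(real^'d) set \<Rightarrow> (real^'d) set" where
  "dual_cone K = {y. \<forall>x\<in>K. 0 \<le> inner x y}"

definition dual_cone0 :: "'d \<Rightarrow> (real^'d) set \<Rightarrow> (real^'d) set" where
  "dual_cone0 e K = {y \<in> dual_cone K. y $ e = 1}"

(* Lambda_1 = [1/c, c]^{d-1}, encoded as vectors whose numeraire coordinate e is 1 *)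
definition Lambda1 :: "'d \<Rightarrow> real \<Rightarrow> (real^'d) set" where
  "Lambda1 e c = {v. v $ e = 1 \<and> (\<forall>i. i \<noteq> e \<longrightarrow> 1 / c \<le> v $ i \<and> v $ i \<le> c)}"

definition LambdaM :: "nat \<Rightarrow> 'd \<Rightarrow> real \<Rightarrow> (nat \<Rightarrow> real^'d) measure" where
  "LambdaM T e c = PiM {0..T} (\<lambda>_. restrict_space borel (Lambda1 e c))"

(* S_t(omega) theta_t: coordinatewise product (theta has coordinate e equal to 1) *)
definition scale_price :: "real^'d \<Rightarrow> real^'d \<Rightarrow> real^'d" where
  "scale_price s \<theta> = (\<chi> i. s $ i * \<theta> $ i)"

definition Xproc :: "'d \<Rightarrow> (nat \<Rightarrow> 'a \<Rightarrow> (real^'d) set) \<Rightarrow> (nat \<Rightarrow> 'a \<Rightarrow> real^'d)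
                      \<Rightarrow> nat \<Rightarrow> 'a \<times> (nat \<Rightarrow> real^'d) \<Rightarrow> real^'d" where
  "Xproc e K S t \<omega>\<theta> =
     closest_point (dual_cone0 e (K t (fst \<omega>\<theta>))) (scale_price (S t (fst \<omega>\<theta>)) (snd \<omega>\<theta> t))"

definition enlarged_family :: "'a measure \<Rightarrow> 'b measure \<Rightarrow> 'a measure set \<Rightarrow> ('a \<times> 'b) measure set" where
  "enlarged_family M L Pfam =
     {Q. prob_space Q \<and> sets Q = sets (M \<Otimes>\<^sub>M L) \<and> distr Q M fst \<in> Pfam}"

definition admissible :: "'a measure set \<Rightarrow> 'a measure \<Rightarrow> (nat \<Rightarrow> 'a measure) \<Rightarrow> nat
      \<Rightarrow> (nat \<Rightarrow> 'a \<Rightarrow> (real^'d) set) \<Rightarrow> (nat \<Rightarrow> 'a \<Rightarrow> real^'d) \<Rightarrow> bool" where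
  "admissible Pfam M F T K \<eta> \<longleftrightarrow>
     (\<forall>t\<le>T. \<eta> t \<in> borel_measurable (F t)) \<and>
     (\<forall>t\<le>T. qs Pfam M (\<lambda>\<omega>. \<eta> t \<omega> \<in> uminus ` K t \<omega>))"

end

theory Submission
  imports Defs
begin


lemma preimage_null:
  assumes f: "f \<in> measurable \<mu> N" and N': "N' \<in> null_sets (distr \<mu> N f)"
  shows "f -` N' \<inter> space \<mu> \<in> null_sets \<mu>"
proof -
  have s: "N' \<in> sets N" using null_setsD2[OF N'] by simp
  have "emeasure (distr \<mu> N f) N' = 0" using null_setsD1[OF N'] .
  then have "emeasure \<mu> (f -` N' \<inter> space \<mu>) = 0" using emeasure_distr[OF f s] by simp
  then show ?thesis using measurable_sets[OF f s] by (rule null_setsI)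
qed

lemma completion_preimage:
  assumes f: "f \<in> measurable \<mu> N" and A: "A \<in> sets (completion (distr \<mu> N f))"
  shows "f -` A \<inter> space \<mu> \<in> sets (completion \<mu>)"
proof -
  from sets_completionE[OF A] obtain S N0 N' where h: "A = S \<union> N0" "N0 \<subseteq> N'"
    "N' \<in> null_sets (distr \<mu> N f)" "S \<in> sets (distr \<mu> N f)" by blast
  have S: "f -` S \<inter> space \<mu> \<in> sets \<mu>" using h(4) f by (simp add: measurable_sets)
  have eq: "f -` A \<inter> space \<mu> = (f -` S \<inter> space \<mu>) \<union> (f -` N0 \<inter> space \<mu>)"
    using h(1) by blast
  have sub: "f -` N0 \<inter> space \<mu> \<subseteq> f -` N' \<inter> space \<mu>" using h(2) by blast
  show ?thesis by (rule sets_completionI[OF eq sub preimage_null[OF f h(3)] S])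
qed

lemma completion_preimage_null:
  assumes f: "f \<in> measurable \<mu> N" and A: "A \<in> sets (completion (distr \<mu> N f))"
    and z: "emeasure (completion (distr \<mu> N f)) A = 0"
  shows "emeasure (completion \<mu>) (f -` A \<inter> space \<mu>) = 0"
proof -
  have "A \<in> null_sets (completion (distr \<mu> N f))" using z A by (rule null_setsI)
  then obtain N' where N': "N' \<in> null_sets (distr \<mu> N f)" "A \<subseteq> N'"
    unfolding null_sets_completion_iff2 by blast
  have sub: "f -` A \<inter> space \<mu> \<subseteq> f -` N' \<inter> space \<mu>" using N'(2) by blast
  have "f -` A \<inter> space \<mu> \<in> null_sets (completion \<mu>)"
    unfolding null_sets_completion_iff2 using preimage_null[OF f N'(1)] sub by blast
  then show ?thesis by (rule null_setsD1)
qed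

lemma um_preimage:
  assumes f: "f \<in> measurable M N" and A: "universally_measurable N A"
  shows "universally_measurable M (f -` A \<inter> space M)"
  unfolding universally_measurable_def
proof (intro allI impI)
  fix \<mu> :: "'a measure" assume h: "prob_space \<mu> \<and> sets \<mu> = sets M"
  have f': "f \<in> measurable \<mu> N" using f h measurable_cong_sets by blast
  have "prob_space (distr \<mu> N f)" using h f' by (simp add: prob_space.prob_space_distr)
  then have "A \<in> sets (completion (distr \<mu> N f))" using A unfolding universally_measurable_def by simp
  from completion_preimage[OF f' this] show "f -` A \<inter> space M \<in> sets (completion \<mu>)"
    using h sets_eq_imp_space_eq by metis
qed

lemma qs_lift:
  assumes Pfam_prob: "\<forall>P\<in>Pfam. prob_space P \<and> sets P = sets M"
    and q: "qs Pfam M Q"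
    and imp: "\<forall>x\<in>space (M \<Otimes>\<^sub>M L). Q (fst x) \<longrightarrow> R x"
  shows "qs (enlarged_family M L Pfam) (M \<Otimes>\<^sub>M L) R"
proof -
  obtain N A where NA: "universally_measurable M A" "N \<subseteq> A" "\<forall>P\<in>Pfam. emeasure (completion P) A = 0"
    "\<forall>\<omega>\<in>space M - N. Q \<omega>"
    using q unfolding qs_def polar_def by blast
  define N' where "N' = fst -` A \<inter> space (M \<Otimes>\<^sub>M L)"
  have um: "universally_measurable (M \<Otimes>\<^sub>M L) N'"
    unfolding N'_def by (rule um_preimage[OF measurable_fst NA(1)])
  have nul: "emeasure (completion Q') N' = 0" if Q': "Q' \<in> enlarged_family M L Pfam" for Q'
  proof -
    have Q'1: "prob_space Q'" "sets Q' = sets (M \<Otimes>\<^sub>M L)" "distr Q' M fst \<in> Pfam"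
      using Q' unfolding enlarged_family_def by auto
    have f: "fst \<in> measurable Q' M" using Q'1(2) measurable_fst measurable_cong_sets by blast
    have P: "prob_space (distr Q' M fst)" using Q'1 f by (simp add: prob_space.prob_space_distr)
    have "A \<in> sets (completion (distr Q' M fst))" using NA(1) P unfolding universally_measurable_def by simp
    from completion_preimage_null[OF f this] NA(3) Q'1(3)
    have "emeasure (completion Q') (fst -` A \<inter> space Q') = 0" by blast
    then show ?thesis unfolding N'_def using Q'1(2) sets_eq_imp_space_eq by metis
  qed
  have "\<forall>x\<in>space (M \<Otimes>\<^sub>M L) - N'. R x"
  proof
    fix x assume x: "x \<in> space (M \<Otimes>\<^sub>M L) - N'"
    then have "fst x \<in> space M" "fst x \<notin> A" unfolding N'_def by (auto simp: space_pair_measure)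
    then have "Q (fst x)" using NA by blast
    then show "R x" using imp x by blast
  qed
  then show ?thesis unfolding qs_def polar_def using um nul by blast
qed

lemma qs_descend:
  assumes Pfam_prob: "\<forall>P\<in>Pfam. prob_space P \<and> sets P = sets M"
    and D: "countable D" "D \<subseteq> space L"
    and q: "qs (enlarged_family M L Pfam) (M \<Otimes>\<^sub>M L) R"
    and imp: "\<forall>\<omega>\<in>space M. \<not> Q \<omega> \<longrightarrow> (\<exists>d\<in>D. \<not> R (\<omega>, d))"
  shows "qs Pfam M Q"
proof -
  obtain N A where NA: "universally_measurable (M \<Otimes>\<^sub>M L) A" "N \<subseteq> A"
    "\<forall>P\<in>enlarged_family M L Pfam. emeasure (completion P) A = 0"
    "\<forall>x\<in>space (M \<Otimes>\<^sub>M L) - N. R x"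
    using q unfolding qs_def polar_def by blast
  have iota: "(\<lambda>\<omega>. (\<omega>, d)) \<in> measurable M (M \<Otimes>\<^sub>M L)" if "d \<in> D" for d
    using that D(2) by (auto intro!: measurable_Pair measurable_const measurable_ident_sets)
  define B where "B = (\<Union>d\<in>D. (\<lambda>\<omega>. (\<omega>, d)) -` A \<inter> space M)"
  have um: "universally_measurable M B"
    unfolding universally_measurable_def B_def
  proof (intro allI impI)
    fix \<mu> :: "'a measure" assume h: "prob_space \<mu> \<and> sets \<mu> = sets M"
    show "(\<Union>d\<in>D. (\<lambda>\<omega>. (\<omega>, d)) -` A \<inter> space M) \<in> sets (completion \<mu>)"
      using um_preimage[OF iota NA(1)] h D(1) unfolding universally_measurable_def
      by (intro sets.countable_UN') auto
  qed
  have nul: "emeasure (completion P) B = 0" if P: "P \<in> Pfam" for P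
  proof -
    have P1: "prob_space P" "sets P = sets M" using P Pfam_prob by auto
    have "(\<lambda>\<omega>. (\<omega>, d)) -` A \<inter> space M \<in> null_sets (completion P)" if d: "d \<in> D" for d
    proof -
      let ?f = "\<lambda>\<omega>. (\<omega>, d)"
      have f: "?f \<in> measurable P (M \<Otimes>\<^sub>M L)" using iota[OF d] P1(2) measurable_cong_sets by blast
      have pr: "prob_space (distr P (M \<Otimes>\<^sub>M L) ?f)" using P1 f by (simp add: prob_space.prob_space_distr)
      have "distr (distr P (M \<Otimes>\<^sub>M L) ?f) M fst = distr P M (fst \<circ> ?f)"
        using f by (intro distr_distr) auto
      also have "\<dots> = P" using P1(2) by (simp add: comp_def distr_id2)
      finally have "distr P (M \<Otimes>\<^sub>M L) ?f \<in> enlarged_family M L Pfam"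
        unfolding enlarged_family_def using pr P by auto
      then have z: "emeasure (completion (distr P (M \<Otimes>\<^sub>M L) ?f)) A = 0" using NA(3) by blast
      have As: "A \<in> sets (completion (distr P (M \<Otimes>\<^sub>M L) ?f))"
        using NA(1) pr unfolding universally_measurable_def by simp
      have "emeasure (completion P) (?f -` A \<inter> space P) = 0"
        by (rule completion_preimage_null[OF f As z])
      moreover have "?f -` A \<inter> space P \<in> sets (completion P)"
        by (rule completion_preimage[OF f As])
      ultimately show ?thesis using P1(2) sets_eq_imp_space_eq by (metis null_setsI)
    qed
    then have "B \<in> null_sets (completion P)" unfolding B_def using D(1) by (intro null_sets_UN') auto
    then show ?thesis by auto
  qed
  have "\<forall>\<omega>\<in>space M - B. Q \<omega>"
  proof (rule ballI, rule ccontr)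
    fix \<omega> assume w: "\<omega> \<in> space M - B" and nq: "\<not> Q \<omega>"
    then obtain d where d: "d \<in> D" "\<not> R (\<omega>, d)" using imp by blast
    have "(\<omega>, d) \<in> space (M \<Otimes>\<^sub>M L)" using w d D(2) by (auto simp: space_pair_measure)
    then have "(\<omega>, d) \<in> A" using NA d by blast
    then show False using w d unfolding B_def by blast
  qed
  then show ?thesis unfolding qs_def polar_def using um nul
    by (intro exI[of _ B] conjI) auto
qed



lemma axis_inner_nth: "inner (axis i (1::real)) (y::real^'d) = y $ i"
  by (simp add: inner_axis')

lemma dual_sub_orthant:
  assumes "nonneg_orthant \<subseteq> K" "y \<in> dual_cone K"
  shows "0 \<le> (y::real^'d) $ i"
proof -
  have "axis i (1::real) \<in> nonneg_orthant" by (auto simp: nonneg_orthant_def axis_def)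
  then show ?thesis using assms unfolding dual_cone_def by (metis (mono_tags) axis_inner_nth mem_Collect_eq subsetD)
qed

lemma zero_coord_frontier:
  assumes "y \<in> (nonneg_orthant :: (real^'d) set)" "y $ i = 0"
  shows "y \<in> frontier nonneg_orthant"
proof -
  have "y \<notin> interior nonneg_orthant"
  proof
    assume "y \<in> interior nonneg_orthant"
    then obtain \<epsilon> where e: "\<epsilon> > 0" "ball y \<epsilon> \<subseteq> nonneg_orthant" using mem_interior by blast
    define w where "w = y - (\<epsilon>/2) *\<^sub>R axis i (1::real)"
    have "dist y w = \<epsilon>/2" using e by (simp add: w_def dist_norm)
    then have "w \<in> nonneg_orthant" using e by auto
    then have "0 \<le> w $ i" unfolding nonneg_orthant_def by blast
    moreover have "w $ i = - \<epsilon>/2" using assms by (simp add: w_def)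
    ultimately show False using e(1) by linarith
  qed
  then show ?thesis using assms closure_subset unfolding frontier_def by blast
qed

lemma dual_pos_coord:
  assumes "nonneg_orthant \<subseteq> K" "dual_cone K \<inter> frontier nonneg_orthant = {0}"
    "y \<in> dual_cone K" "y \<noteq> 0"
  shows "0 < (y::real^'d) $ i"
proof -
  have yo: "y \<in> nonneg_orthant" using dual_sub_orthant[OF assms(1,3)] by (auto simp: nonneg_orthant_def)
  have "y $ i \<noteq> 0"
  proof
    assume "y $ i = 0"
    then have "y \<in> frontier nonneg_orthant" using zero_coord_frontier yo by blast
    then show False using assms by blast
  qed
  then show ?thesis using dual_sub_orthant[OF assms(1,3)] by (simp add: order_le_neq_trans)
qed

lemma dual_scale: "y \<in> dual_cone K \<Longrightarrow> 0 \<le> a \<Longrightarrow> a *\<^sub>R y \<in> dual_cone K"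
  unfolding dual_cone_def by auto

lemma closed_dual0: "closed (dual_cone0 e (K::(real^'d) set))"
proof -
  have "dual_cone0 e K = (\<Inter>x\<in>K. {y. inner x y \<ge> 0}) \<inter> {y. inner (axis e 1) y = 1}"
    unfolding dual_cone0_def dual_cone_def by (auto simp: axis_inner_nth)
  moreover have "closed \<dots>"
    by (intro closed_Int closed_INT closed_halfspace_ge closed_hyperplane ballI)
  ultimately show ?thesis by simp
qed

lemma convex_dual0: "convex (dual_cone0 e (K::(real^'d) set))"
proof -
  have "dual_cone0 e K = (\<Inter>x\<in>K. {y. inner x y \<ge> 0}) \<inter> {y. inner (axis e 1) y = 1}"
    unfolding dual_cone0_def dual_cone_def by (auto simp: axis_inner_nth)
  moreover have "convex \<dots>"
    by (intro convex_Int convex_INT convex_halfspace_ge convex_hyperplane ballI)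
  ultimately show ?thesis by simp
qed

lemma bipolar:
  fixes K :: "(real^'d) set"
  assumes "closed K" "convex K" "cone K" "0 \<in> K" "z \<notin> uminus ` K"
  shows "\<exists>a\<in>dual_cone K. inner z a > 0"
proof -
  have "-z \<notin> K" using assms(5) by (metis add.inverse_inverse image_eqI)
  then obtain a b where ab: "inner a (-z) < b" "\<forall>x\<in>K. inner a x > b"
    using separating_hyperplane_closed_point[OF assms(2,1)] by blast
  have b: "b < 0" using ab(2) assms(4) by force
  have "a \<in> dual_cone K"
    unfolding dual_cone_def
  proof (rule CollectI, rule ballI, rule ccontr)
    fix x assume x: "x \<in> K" and n: "\<not> 0 \<le> inner x a"
    then have neg: "inner a x < 0" by (simp add: inner_commute)
    define l where "l = b / inner a x"
    have l: "l \<ge> 0" using b neg by (simp add: l_def divide_nonpos_neg)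
    have "l *\<^sub>R x \<in> K" using assms(3) x l unfolding cone_def by blast
    then have "inner a (l *\<^sub>R x) > b" using ab by blast
    moreover have "inner a (l *\<^sub>R x) = b" using neg by (simp add: l_def)
    ultimately show False by simp
  qed
  moreover have "inner z a > 0" using ab(1) b by (simp add: inner_commute)
  ultimately show ?thesis by blast
qed



definition Dset :: "'d \<Rightarrow> real \<Rightarrow> (real^'d) set" where
  "Dset e c = {v. v $ e = 1 \<and> (\<forall>i. i \<noteq> e \<longrightarrow> v $ i \<in> \<rat> \<and> 1/c \<le> v $ i \<and> v $ i \<le> c)}"

lemma countable_Dset:
  fixes e :: "'d::finite"
  shows "countable (Dset e c)"
proof -
  have "Dset e c \<subseteq> range (\<lambda>f::'d \<Rightarrow> rat. \<chi> i. of_rat (f i))"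
  proof
    fix v assume v: "v \<in> Dset e c"
    have vi: "v $ i \<in> \<rat>" for i using v unfolding Dset_def by (cases "i = e") auto
    then have "\<forall>i. v $ i \<in> \<rat>" by blast
    then have "\<forall>i. \<exists>r. v $ i = of_rat r" unfolding Rats_def by blast
    from choice[OF this] obtain f where f: "\<forall>i. v $ i = of_rat (f i)" by blast
    have "v = (\<chi> i. of_rat (f i))" using f by (simp add: vec_eq_iff)
    then show "v \<in> range (\<lambda>f::'d \<Rightarrow> rat. \<chi> i. of_rat (f i))" by blast
  qed
  moreover have "countable (range (\<lambda>f::'d \<Rightarrow> rat. (\<chi> i. of_rat (f i)) :: real^'d))" by simp
  ultimately show ?thesis by (rule countable_subset)
qed

lemma Dset_Lambda1: "Dset e c \<subseteq> Lambda1 e c"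
  unfolding Dset_def Lambda1_def by auto

lemma geo_neg:
  assumes "z \<in> uminus ` K" "x \<in> dual_cone0 e K"
  shows "inner z x \<le> 0"
proof -
  obtain k where k: "k \<in> K" "z = - k" using assms(1) by blast
  have "0 \<le> inner k x" using assms(2) k(1) unfolding dual_cone0_def dual_cone_def by blast
  then show ?thesis using k(2) by simp
qed

lemma geo_pos:
  fixes K :: "(real^'d) set" and s z :: "real^'d"
  assumes Kc: "closed K" "convex K" "cone K" "nonneg_orthant \<subseteq> K"
    and Kd: "dual_cone K \<inter> frontier nonneg_orthant = {0}"
    and s: "s \<in> dual_cone0 e K" and c: "c > 1"
    and bnd: "\<forall>y\<in>dual_cone0 e K. \<forall>i. i \<noteq> e \<longrightarrow> s $ i / c \<le> y $ i \<and> y $ i \<le> c * s $ i"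
    and z: "z \<notin> uminus ` K"
  shows "\<exists>v\<in>Dset e c. 0 < inner z (closest_point (dual_cone0 e K) (scale_price s v))"
proof -
  define C where "C = dual_cone0 e K"
  have C: "closed C" "convex C" "C \<noteq> {}" using closed_dual0 convex_dual0 s unfolding C_def by auto
  have "0 \<in> nonneg_orthant" by (simp add: nonneg_orthant_def)
  then have "0 \<in> K" using Kc(4) by blast
  from bipolar[OF Kc(1,2,3) this z] obtain a where a: "a \<in> dual_cone K" "inner z a > 0" by blast
  have a0: "a \<noteq> 0" using a(2) by auto
  have ae: "a $ e > 0" by (rule dual_pos_coord[OF Kc(4) Kd a(1) a0])
  define y where "y = (1 / a $ e) *\<^sub>R a"
  have yd: "y \<in> dual_cone K" unfolding y_def using a(1) ae by (intro dual_scale) auto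
  have ye: "y $ e = 1" using ae by (simp add: y_def)
  have yC: "y \<in> C" using yd ye unfolding C_def dual_cone0_def by blast
  have zy: "inner z y > 0" using a(2) ae by (simp add: y_def)
  have sd: "s \<in> dual_cone K" and se: "s $ e = 1" using s unfolding dual_cone0_def by auto
  have s0: "s \<noteq> 0" using se by auto
  have spos: "s $ i > 0" for i by (rule dual_pos_coord[OF Kc(4) Kd sd s0])
  define \<theta> where "\<theta> = (\<chi> i. y $ i / s $ i)"
  have sp: "scale_price s \<theta> = y"
  proof -
    have sn: "s $ i \<noteq> 0" for i using spos[of i] by simp
    show ?thesis unfolding scale_price_def \<theta>_def by (simp add: vec_eq_iff sn)
  qed
  have \<theta>e: "\<theta> $ e = 1" using ye se by (simp add: \<theta>_def)
  have \<theta>b: "1/c \<le> \<theta> $ i \<and> \<theta> $ i \<le> c" if "i \<noteq> e" for i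
  proof -
    have b: "s $ i / c \<le> y $ i" "y $ i \<le> c * s $ i" using bnd yC that unfolding C_def by auto
    have "1/c \<le> y $ i / s $ i" using b(1) spos[of i] c by (simp add: field_simps)
    moreover have "y $ i / s $ i \<le> c" using b(2) spos[of i] by (simp add: field_simps)
    ultimately show ?thesis by (simp add: \<theta>_def)
  qed
  define g where "g v = inner z (closest_point C (scale_price s v))" for v
  have gt: "g \<theta> > 0" unfolding g_def sp using closest_point_self[OF yC] zy by simp
  have cs: "continuous_on UNIV (scale_price s)"
    unfolding scale_price_def[abs_def] by (intro continuous_intros)
  have ccp: "continuous_on UNIV (closest_point C)" by (rule continuous_on_closest_point[OF C(2,1,3)])
  have "continuous_on UNIV g"
    unfolding g_def[abs_def]
    by (intro continuous_on_inner continuous_on_const continuous_on_compose2[OF ccp cs]) auto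
  then have "isCont g \<theta>" by (simp add: continuous_on_eq_continuous_at)
  then obtain \<delta> where \<delta>: "\<delta> > 0" "\<forall>v. dist v \<theta> < \<delta> \<longrightarrow> dist (g v) (g \<theta>) < g \<theta>"
    unfolding continuous_at_eps_delta using gt by blast
  define \<eta> where "\<eta> = \<delta> / (2 * real CARD('d))"
  have \<eta>: "\<eta> > 0" using \<delta>(1) by (simp add: \<eta>_def)
  have "\<forall>i. \<exists>r. i \<noteq> e \<longrightarrow> r \<in> \<rat> \<and> 1/c \<le> r \<and> r \<le> c \<and> \<bar>r - \<theta> $ i\<bar> \<le> \<eta>"
  proof
    fix i show "\<exists>r. i \<noteq> e \<longrightarrow> r \<in> \<rat> \<and> 1/c \<le> r \<and> r \<le> c \<and> \<bar>r - \<theta> $ i\<bar> \<le> \<eta>"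
    proof (cases "i = e")
      case True then show ?thesis by blast
    next
      case False
      have "1/c < 1" using c by simp
      then have ci: "1/c < c" using c by linarith
      have lt: "max (1/c) (\<theta> $ i - \<eta>) < min c (\<theta> $ i + \<eta>)"
        using \<theta>b[OF False] \<eta> ci by auto
      from Rats_dense_in_real[OF lt] obtain r where "r \<in> \<rat>" "max (1/c) (\<theta> $ i - \<eta>) < r" "r < min c (\<theta> $ i + \<eta>)"
        by blast
      then show ?thesis by (intro exI[of _ r]) auto
    qed
  qed
  from choice[OF this] obtain R where R: "\<forall>i. i \<noteq> e \<longrightarrow> R i \<in> \<rat> \<and> 1/c \<le> R i \<and> R i \<le> c \<and> \<bar>R i - \<theta> $ i\<bar> \<le> \<eta>"
    by blast
  define v where "v = (\<chi> i. if i = e then 1 else R i)"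
  have vD: "v \<in> Dset e c" unfolding Dset_def v_def using R by auto
  have vi: "\<bar>(v - \<theta>) $ i\<bar> \<le> \<eta>" for i
    using R \<theta>e \<eta> by (cases "i = e") (auto simp: v_def)
  have "dist v \<theta> \<le> (\<Sum>i\<in>UNIV. \<bar>(v - \<theta>) $ i\<bar>)" unfolding dist_norm by (rule norm_le_l1_cart)
  also have "\<dots> \<le> (\<Sum>i\<in>(UNIV::'d set). \<eta>)" by (intro sum_mono vi)
  also have "\<dots> = \<delta> / 2" by (simp add: \<eta>_def)
  also have "\<dots> < \<delta>" using \<delta>(1) by simp
  finally have "dist (g v) (g \<theta>) < g \<theta>" using \<delta>(2) by blast
  then have "\<bar>g v - g \<theta>\<bar> < g \<theta>" by (simp add: dist_real_def)
  then have "g v > 0" by (simp add: abs_less_iff)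
  then show ?thesis using vD unfolding g_def C_def by blast
qed



theorem mainTheorem1:
  fixes M :: "'a measure" and F0 F :: "nat \<Rightarrow> 'a measure" and T :: nat
    and Pfam :: "'a measure set"
    and K :: "nat \<Rightarrow> 'a \<Rightarrow> (real^'d) set" and S :: "nat \<Rightarrow> 'a \<Rightarrow> real^'d"
    and e :: 'd and c :: real
  assumes dim: "CARD('d) \<ge> 2"
    and Pfam_ne: "Pfam \<noteq> {}"
    and Pfam_prob: "\<forall>P\<in>Pfam. prob_space P \<and> sets P = sets M"
    and filt_sub: "\<forall>t\<le>T. subalgebra M (F t) \<and> subalgebra (F t) (F0 t)"
    and filt_mono: "\<forall>s t. s \<le> t \<and> t \<le> T \<longrightarrow> sets (F0 s) \<subseteq> sets (F0 t) \<and> sets (F s) \<subseteq> sets (F t)"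
    and K_meas: "\<forall>t\<le>T. random_set_measurable (F0 t) (K t)"
    and K_cone: "\<forall>t\<le>T. \<forall>\<omega>\<in>space M. closed (K t \<omega>) \<and> convex (K t \<omega>) \<and> cone (K t \<omega>)
                     \<and> nonneg_orthant \<subseteq> K t \<omega>"
    and K_dual: "\<forall>t\<le>T. \<forall>\<omega>\<in>space M. dual_cone (K t \<omega>) \<inter> frontier nonneg_orthant = {0}
                     \<and> interior (dual_cone (K t \<omega>)) \<noteq> {}"
    and S_adapted: "\<forall>t\<le>T. S t \<in> borel_measurable (F0 t)"
    and S_in: "\<forall>t\<le>T. \<forall>\<omega>\<in>space M. S t \<omega> \<in> dual_cone0 e (K t \<omega>) \<inter> interior (dual_cone (K t \<omega>))"
    and c_gt: "c > 1"
    and c_bound: "\<forall>t\<le>T. \<forall>\<omega>\<in>space M. \<forall>y\<in>dual_cone0 e (K t \<omega>). \<forall>i. i \<noteq> e \<longrightarrow>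
                     S t \<omega> $ i / c \<le> y $ i \<and> y $ i \<le> c * S t \<omega> $ i"
  shows "(\<forall>t\<le>T. \<forall>\<zeta>\<in>borel_measurable (F t).
            qs Pfam M (\<lambda>\<omega>. \<zeta> \<omega> \<in> uminus ` K t \<omega>) \<longleftrightarrow>
            qs (enlarged_family M (LambdaM T e c) Pfam) (M \<Otimes>\<^sub>M LambdaM T e c)
               (\<lambda>\<omega>\<theta>. inner (\<zeta> (fst \<omega>\<theta>)) (Xproc e K S t \<omega>\<theta>) \<le> 0))
       \<and> (\<forall>\<eta>. (\<forall>t\<le>T. \<eta> t \<in> borel_measurable (F t)) \<longrightarrow>
            (admissible Pfam M F T K \<eta> \<longleftrightarrow>
             (\<forall>t\<le>T. qs (enlarged_family M (LambdaM T e c) Pfam) (M \<Otimes>\<^sub>M LambdaM T e c)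
                       (\<lambda>\<omega>\<theta>. inner (\<eta> t (fst \<omega>\<theta>)) (Xproc e K S t \<omega>\<theta>) \<le> 0))))"
proof -
  let ?L = "LambdaM T e c"
  let ?Fam = "enlarged_family M ?L Pfam"
  define D where "D = (\<lambda>v. restrict (\<lambda>_. v) {0..T}) ` Dset e c"
  have Dc: "countable D" unfolding D_def using countable_Dset by blast
  have spL: "space ?L = (\<Pi>\<^sub>E i\<in>{0..T}. Lambda1 e c)"
    unfolding LambdaM_def by (simp add: space_PiM space_restrict_space)
  have DL: "D \<subseteq> space ?L" unfolding D_def spL using Dset_Lambda1[of e c] by auto
  have part1: "qs Pfam M (\<lambda>\<omega>. \<zeta> \<omega> \<in> uminus ` K t \<omega>) \<longleftrightarrow>
            qs ?Fam (M \<Otimes>\<^sub>M ?L) (\<lambda>\<omega>\<theta>. inner (\<zeta> (fst \<omega>\<theta>)) (Xproc e K S t \<omega>\<theta>) \<le> 0)"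
    if t: "t \<le> T" for t and \<zeta> :: "'a \<Rightarrow> real^'d"
  proof
    assume q: "qs Pfam M (\<lambda>\<omega>. \<zeta> \<omega> \<in> uminus ` K t \<omega>)"
    show "qs ?Fam (M \<Otimes>\<^sub>M ?L) (\<lambda>\<omega>\<theta>. inner (\<zeta> (fst \<omega>\<theta>)) (Xproc e K S t \<omega>\<theta>) \<le> 0)"
    proof (rule qs_lift[OF Pfam_prob q], rule ballI, rule impI)
      fix x assume x: "x \<in> space (M \<Otimes>\<^sub>M ?L)" and z: "\<zeta> (fst x) \<in> uminus ` K t (fst x)"
      have w: "fst x \<in> space M" using x by (auto simp: space_pair_measure)
      have sC: "S t (fst x) \<in> dual_cone0 e (K t (fst x))" using S_in t w by blast
      have "Xproc e K S t x \<in> dual_cone0 e (K t (fst x))"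
        unfolding Xproc_def using closed_dual0 sC by (intro closest_point_in_set) auto
      then show "inner (\<zeta> (fst x)) (Xproc e K S t x) \<le> 0" using geo_neg z by blast
    qed
  next
    assume q: "qs ?Fam (M \<Otimes>\<^sub>M ?L) (\<lambda>\<omega>\<theta>. inner (\<zeta> (fst \<omega>\<theta>)) (Xproc e K S t \<omega>\<theta>) \<le> 0)"
    show "qs Pfam M (\<lambda>\<omega>. \<zeta> \<omega> \<in> uminus ` K t \<omega>)"
    proof (rule qs_descend[OF Pfam_prob Dc DL q], rule ballI, rule impI)
      fix \<omega> assume w: "\<omega> \<in> space M" and z: "\<zeta> \<omega> \<notin> uminus ` K t \<omega>"
      have Kc: "closed (K t \<omega>)" "convex (K t \<omega>)" "cone (K t \<omega>)" "nonneg_orthant \<subseteq> K t \<omega>"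
        using K_cone t w by blast+
      have Kd: "dual_cone (K t \<omega>) \<inter> frontier nonneg_orthant = {0}" using K_dual t w by blast
      have sC: "S t \<omega> \<in> dual_cone0 e (K t \<omega>)" using S_in t w by blast
      have bnd: "\<forall>y\<in>dual_cone0 e (K t \<omega>). \<forall>i. i \<noteq> e \<longrightarrow> S t \<omega> $ i / c \<le> y $ i \<and> y $ i \<le> c * S t \<omega> $ i"
        using c_bound t w by blast
      obtain v where v: "v \<in> Dset e c"
        "0 < inner (\<zeta> \<omega>) (closest_point (dual_cone0 e (K t \<omega>)) (scale_price (S t \<omega>) v))"
        using geo_pos[OF Kc Kd sC c_gt bnd z] by blast
      define d where "d = restrict (\<lambda>_. v) {0..T}"
      have dD: "d \<in> D" unfolding D_def d_def using v(1) by blast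
      have "d t = v" using t by (simp add: d_def)
      then have "Xproc e K S t (\<omega>, d) = closest_point (dual_cone0 e (K t \<omega>)) (scale_price (S t \<omega>) v)"
        by (simp add: Xproc_def)
      then have "\<not> inner (\<zeta> (fst (\<omega>, d))) (Xproc e K S t (\<omega>, d)) \<le> 0" using v(2) by simp
      then show "\<exists>d\<in>D. \<not> inner (\<zeta> (fst (\<omega>, d))) (Xproc e K S t (\<omega>, d)) \<le> 0" using dD by blast
    qed
  qed
  show ?thesis
  proof (intro conjI allI impI ballI)
    fix t and \<zeta> :: "'a \<Rightarrow> real^'d" assume "t \<le> T" "\<zeta> \<in> borel_measurable (F t)"
    then show "qs Pfam M (\<lambda>\<omega>. \<zeta> \<omega> \<in> uminus ` K t \<omega>) \<longleftrightarrow>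
            qs ?Fam (M \<Otimes>\<^sub>M ?L) (\<lambda>\<omega>\<theta>. inner (\<zeta> (fst \<omega>\<theta>)) (Xproc e K S t \<omega>\<theta>) \<le> 0)"
      using part1 by blast
  next
    fix \<eta> :: "nat \<Rightarrow> 'a \<Rightarrow> real^'d" assume m: "\<forall>t\<le>T. \<eta> t \<in> borel_measurable (F t)"
    show "admissible Pfam M F T K \<eta> \<longleftrightarrow>
             (\<forall>t\<le>T. qs ?Fam (M \<Otimes>\<^sub>M ?L)
                       (\<lambda>\<omega>\<theta>. inner (\<eta> t (fst \<omega>\<theta>)) (Xproc e K S t \<omega>\<theta>) \<le> 0))"
      unfolding admissible_def using m part1 by blast
  qed
qed

end
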